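(* Let $Q$ be a left automorphic loop, $S\le Q$, and $x,y\in Q$. If $x\in xS\cap yS$, then $x\backslash(xS\cap yS)=\{x\backslash z : z\in xS\cap yS\}$ is a subloop of $S$.
   Context: A loop is left automorphic if every left inner mapping (element of the stabilizer of $1$ in the group generated by the left translations $L_x:y\mapsto xy$) is an automorphism. $x\backslash y=L_x^{-1}(y)$; $xS=\{xs:s\in S\}$. *)

theory Defs
  imports Main
begin

definition loop :: "'a set \<Rightarrow> ('a \<Rightarrow> 'a \<Rightarrow> 'a) \<Rightarrow> 'a \<Rightarrow> bool" where
  "loop Q m e \<longleftrightarrow>
     e \<in> Q \<and>
     (\<forall>a\<in>Q. \<forall>b\<in>Q. m a b \<in> Q) \<and>
     (\<forall>a\<in>Q. m e a = a \<and> m a e = a) \<and>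
     (\<forall>a\<in>Q. \<forall>b\<in>Q. \<exists>!x. x \<in> Q \<and> m a x = b) \<and>
     (\<forall>a\<in>Q. \<forall>b\<in>Q. \<exists>!y. y \<in> Q \<and> m y a = b)"

definition ldiv :: "'a set \<Rightarrow> ('a \<Rightarrow> 'a \<Rightarrow> 'a) \<Rightarrow> 'a \<Rightarrow> 'a \<Rightarrow> 'a" where
  "ldiv Q m x y = (THE z. z \<in> Q \<and> m x z = y)"

definition rdiv :: "'a set \<Rightarrow> ('a \<Rightarrow> 'a \<Rightarrow> 'a) \<Rightarrow> 'a \<Rightarrow> 'a \<Rightarrow> 'a" where
  "rdiv Q m y x = (THE z. z \<in> Q \<and> m z x = y)"

text \<open>Left translations and their inverses, as permutations of Q (identity outside Q).\<close>

definition Ltr :: "'a set \<Rightarrow> ('a \<Rightarrow> 'a \<Rightarrow> 'a) \<Rightarrow> 'a \<Rightarrow> 'a \<Rightarrow> 'a" where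
  "Ltr Q m x = (\<lambda>y. if y \<in> Q then m x y else y)"

definition Ltr_inv :: "'a set \<Rightarrow> ('a \<Rightarrow> 'a \<Rightarrow> 'a) \<Rightarrow> 'a \<Rightarrow> 'a \<Rightarrow> 'a" where
  "Ltr_inv Q m x = (\<lambda>y. if y \<in> Q then ldiv Q m x y else y)"

inductive_set left_mult_group :: "'a set \<Rightarrow> ('a \<Rightarrow> 'a \<Rightarrow> 'a) \<Rightarrow> ('a \<Rightarrow> 'a) set"
  for Q m where
  lmg_id: "id \<in> left_mult_group Q m"
| lmg_L: "\<lbrakk>g \<in> left_mult_group Q m; x \<in> Q\<rbrakk> \<Longrightarrow> Ltr Q m x \<circ> g \<in> left_mult_group Q m"
| lmg_Linv: "\<lbrakk>g \<in> left_mult_group Q m; x \<in> Q\<rbrakk> \<Longrightarrow> Ltr_inv Q m x \<circ> g \<in> left_mult_group Q m"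

definition left_inner_maps :: "'a set \<Rightarrow> ('a \<Rightarrow> 'a \<Rightarrow> 'a) \<Rightarrow> 'a \<Rightarrow> ('a \<Rightarrow> 'a) set" where
  "left_inner_maps Q m e = {g \<in> left_mult_group Q m. g e = e}"

definition loop_aut :: "'a set \<Rightarrow> ('a \<Rightarrow> 'a \<Rightarrow> 'a) \<Rightarrow> ('a \<Rightarrow> 'a) \<Rightarrow> bool" where
  "loop_aut Q m f \<longleftrightarrow> bij_betw f Q Q \<and> (\<forall>a\<in>Q. \<forall>b\<in>Q. f (m a b) = m (f a) (f b))"

definition left_automorphic_loop :: "'a set \<Rightarrow> ('a \<Rightarrow> 'a \<Rightarrow> 'a) \<Rightarrow> 'a \<Rightarrow> bool" where
  "left_automorphic_loop Q m e \<longleftrightarrow>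
     loop Q m e \<and> (\<forall>f \<in> left_inner_maps Q m e. loop_aut Q m f)"

definition subloop :: "'a set \<Rightarrow> ('a \<Rightarrow> 'a \<Rightarrow> 'a) \<Rightarrow> 'a \<Rightarrow> 'a set \<Rightarrow> bool" where
  "subloop Q m e S \<longleftrightarrow>
     S \<subseteq> Q \<and> e \<in> S \<and>
     (\<forall>a\<in>S. \<forall>b\<in>S. m a b \<in> S \<and> ldiv Q m a b \<in> S \<and> rdiv Q m a b \<in> S)"

end

theory Submission
  imports Defs
begin

lemma loop_parts: assumes "loop Q m e"
  shows "e \<in> Q" "\<forall>a\<in>Q. \<forall>b\<in>Q. m a b \<in> Q" "\<forall>a\<in>Q. m e a = a \<and> m a e = a"
    "\<forall>a\<in>Q. \<forall>b\<in>Q. \<exists>!x. x \<in> Q \<and> m a x = b"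
    "\<forall>a\<in>Q. \<forall>b\<in>Q. \<exists>!y. y \<in> Q \<and> m y a = b"
  using assms unfolding loop_def by simp_all
lemma loop_mem: "loop Q m e \<Longrightarrow> a \<in> Q \<Longrightarrow> b \<in> Q \<Longrightarrow> m a b \<in> Q"
  using loop_parts(2)[of Q m e] by simp
lemma loop_e: "loop Q m e \<Longrightarrow> a \<in> Q \<Longrightarrow> m e a = a \<and> m a e = a"
  using loop_parts(3)[of Q m e] by simp
lemma ldiv_prop: assumes "loop Q m e" "a \<in> Q" "b \<in> Q"
  shows "ldiv Q m a b \<in> Q \<and> m a (ldiv Q m a b) = b"
proof -
  have "\<exists>!z. z \<in> Q \<and> m a z = b" using assms loop_parts(4)[of Q m e] by simp
  then show ?thesis unfolding ldiv_def by (rule theI')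
qed
lemma ldiv_unique: assumes "loop Q m e" "a \<in> Q" "z \<in> Q" "m a z = b"
  shows "ldiv Q m a b = z"
proof -
  have b: "b \<in> Q" using loop_mem[OF assms(1,2,3)] assms(4) by simp
  have "\<exists>!z. z \<in> Q \<and> m a z = b" using assms b loop_parts(4)[of Q m e] by simp
  then show ?thesis unfolding ldiv_def using assms by (auto intro: the1_equality)
qed
lemma rdiv_prop: assumes "loop Q m e" "a \<in> Q" "b \<in> Q"
  shows "rdiv Q m b a \<in> Q \<and> m (rdiv Q m b a) a = b"
proof -
  have "\<exists>!z. z \<in> Q \<and> m z a = b" using assms loop_parts(5)[of Q m e] by simp
  then show ?thesis unfolding rdiv_def by (rule theI')
qed
lemma rdiv_unique: assumes "loop Q m e" "a \<in> Q" "z \<in> Q" "m z a = b"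
  shows "rdiv Q m b a = z"
proof -
  have b: "b \<in> Q" using loop_mem[OF assms(1,3,2)] assms(4) by simp
  have "\<exists>!z. z \<in> Q \<and> m z a = b" using assms b loop_parts(5)[of Q m e] by simp
  then show ?thesis unfolding rdiv_def using assms by (auto intro: the1_equality)
qed

theorem corollary6p6:
  fixes Q :: "'a set" and m :: "'a \<Rightarrow> 'a \<Rightarrow> 'a" and e :: 'a
    and S :: "'a set" and x y :: 'a
  assumes "left_automorphic_loop Q m e"
    and "subloop Q m e S"
    and "x \<in> Q" and "y \<in> Q"
    and "x \<in> (m x ` S) \<inter> (m y ` S)"
  shows "subloop Q m e (ldiv Q m x ` ((m x ` S) \<inter> (m y ` S)))
         \<and> ldiv Q m x ` ((m x ` S) \<inter> (m y ` S)) \<subseteq> S"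
proof -
  have L: "loop Q m e" using assms(1) by (simp add: left_automorphic_loop_def)
  have SQ: "S \<subseteq> Q" and eS: "e \<in> S"
    and Scl: "\<And>a b. a \<in> S \<Longrightarrow> b \<in> S \<Longrightarrow> m a b \<in> S \<and> ldiv Q m a b \<in> S \<and> rdiv Q m a b \<in> S"
    using assms(2) by (auto simp: subloop_def)
  have eQ: "e \<in> Q" using L by (simp add: loop_def)
  obtain s0 where s0: "s0 \<in> S" "x = m y s0" using assms(5) by auto
  have s0Q: "s0 \<in> Q" using s0 SQ by auto
  define \<phi> where "\<phi> = Ltr_inv Q m x \<circ> (Ltr Q m y \<circ> (Ltr Q m s0 \<circ> id))"
  have phiG: "\<phi> \<in> left_mult_group Q m" unfolding \<phi>_def
    by (intro left_mult_group.intros s0Q assms(3,4))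
  have phiQ: "\<And>t. t \<in> Q \<Longrightarrow> \<phi> t = ldiv Q m x (m y (m s0 t))"
  proof -
    fix t assume t: "t \<in> Q"
    have 1: "m s0 t \<in> Q" using loop_mem[OF L s0Q t] .
    have 2: "m y (m s0 t) \<in> Q" using loop_mem[OF L assms(4) 1] .
    show "\<phi> t = ldiv Q m x (m y (m s0 t))" unfolding \<phi>_def Ltr_def Ltr_inv_def using t 1 2 by simp
  qed
  have "\<phi> e = ldiv Q m x x" using phiQ[OF eQ] loop_e[OF L s0Q] s0 by simp
  also have "\<dots> = e" using ldiv_unique[OF L assms(3) eQ] loop_e[OF L assms(3)] by simp
  finally have "\<phi> \<in> left_inner_maps Q m e" using phiG by (simp add: left_inner_maps_def)
  then have aut: "loop_aut Q m \<phi>" using assms(1) by (simp add: left_automorphic_loop_def)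
  have phimul: "\<And>a b. a \<in> Q \<Longrightarrow> b \<in> Q \<Longrightarrow> \<phi> (m a b) = m (\<phi> a) (\<phi> b)"
    using aut by (simp add: loop_aut_def)
  have phiin: "\<And>a. a \<in> Q \<Longrightarrow> \<phi> a \<in> Q"
    using aut by (auto simp: loop_aut_def bij_betw_def)
  have xphi: "\<And>c. c \<in> Q \<Longrightarrow> m x (\<phi> c) = m y (m s0 c)"
  proof -
    fix c assume c: "c \<in> Q"
    have w: "m y (m s0 c) \<in> Q" using loop_mem[OF L] s0Q assms(4) c by blast
    show "m x (\<phi> c) = m y (m s0 c)" using phiQ[OF c] ldiv_prop[OF L assms(3) w] by simp
  qed
  define T where "T = (m x ` S) \<inter> (m y ` S)"
  have fwd: "\<And>c. c \<in> S \<Longrightarrow> \<phi> c \<in> S \<Longrightarrow> \<phi> c \<in> ldiv Q m x ` T"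
  proof -
    fix c assume c: "c \<in> S" "\<phi> c \<in> S"
    have "m x (\<phi> c) = m y (m s0 c)" using xphi c SQ by auto
    moreover have "m s0 c \<in> S" using Scl s0 c by auto
    ultimately have "m x (\<phi> c) \<in> T" unfolding T_def using c by (metis IntI image_eqI)
    moreover have "ldiv Q m x (m x (\<phi> c)) = \<phi> c"
      using ldiv_unique[OF L assms(3)] c SQ by auto
    ultimately show "\<phi> c \<in> ldiv Q m x ` T" by (metis image_eqI)
  qed
  have bwd: "\<And>d. d \<in> ldiv Q m x ` T \<Longrightarrow> d \<in> S \<and> (\<exists>c\<in>S. d = \<phi> c)"
  proof -
    fix d assume "d \<in> ldiv Q m x ` T"
    then obtain a b where ab: "a \<in> S" "b \<in> S" "d = ldiv Q m x (m x a)" "m x a = m y b"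
      unfolding T_def by auto
    have aQ: "a \<in> Q" "b \<in> Q" using ab SQ by auto
    have da: "d = a" using ab ldiv_unique[OF L assms(3) aQ(1)] by simp
    define c where "c = ldiv Q m s0 b"
    have cS: "c \<in> S" using Scl s0 ab c_def by auto
    have "m s0 c = b" using ldiv_prop[OF L s0Q aQ(2)] c_def by simp
    then have "\<phi> c = ldiv Q m x (m y b)" using phiQ cS SQ by auto
    also have "\<dots> = a" using ab ldiv_unique[OF L assms(3) aQ(1)] by simp
    finally show "d \<in> S \<and> (\<exists>c\<in>S. d = \<phi> c)" using da ab cS by auto
  qed
  have sub: "ldiv Q m x ` T \<subseteq> S" using bwd by blast
  have "subloop Q m e (ldiv Q m x ` T)"
    unfolding subloop_def
  proof (intro conjI ballI)
    show "ldiv Q m x ` T \<subseteq> Q" using sub SQ by auto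
    have "x \<in> T" using assms(5) T_def by simp
    moreover have "ldiv Q m x x = e" using ldiv_unique[OF L assms(3) eQ] loop_e[OF L assms(3)] by simp
    ultimately show "e \<in> ldiv Q m x ` T" by (metis image_eqI)
  next
    fix a b assume a: "a \<in> ldiv Q m x ` T" and b: "b \<in> ldiv Q m x ` T"
    obtain c1 where c1: "c1 \<in> S" "a = \<phi> c1" using bwd[OF a] by auto
    obtain c2 where c2: "c2 \<in> S" "b = \<phi> c2" using bwd[OF b] by auto
    have aS: "a \<in> S" and bS: "b \<in> S" using bwd a b by auto
    have cQ: "c1 \<in> Q" "c2 \<in> Q" using c1 c2 SQ by auto
    have "\<phi> (m c1 c2) = m a b" using phimul cQ c1 c2 by simp
    then show "m a b \<in> ldiv Q m x ` T" using fwd[of "m c1 c2"] Scl c1 c2 aS bS by auto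
    have lq: "ldiv Q m c1 c2 \<in> Q \<and> m c1 (ldiv Q m c1 c2) = c2" using ldiv_prop[OF L cQ] .
    have "\<phi> (ldiv Q m c1 c2) = ldiv Q m a b"
    proof -
      have "m a (\<phi> (ldiv Q m c1 c2)) = \<phi> c2" using phimul[OF cQ(1), of "ldiv Q m c1 c2"] lq c1 by simp
      then show ?thesis using ldiv_unique[OF L phiin[OF cQ(1)] phiin[of "ldiv Q m c1 c2"]] lq c1 c2 by simp
    qed
    then show "ldiv Q m a b \<in> ldiv Q m x ` T" using fwd[of "ldiv Q m c1 c2"] Scl c1 c2 aS bS by auto
    have rq: "rdiv Q m c1 c2 \<in> Q \<and> m (rdiv Q m c1 c2) c2 = c1" using rdiv_prop[OF L cQ(2) cQ(1)] .
    have "\<phi> (rdiv Q m c1 c2) = rdiv Q m a b"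
    proof -
      have "m (\<phi> (rdiv Q m c1 c2)) b = \<phi> c1" using phimul[of "rdiv Q m c1 c2" c2] rq cQ c2 by simp
      then show ?thesis using rdiv_unique[OF L phiin[OF cQ(2)] phiin[of "rdiv Q m c1 c2"]] rq c1 c2 by simp
    qed
    then show "rdiv Q m a b \<in> ldiv Q m x ` T" using fwd[of "rdiv Q m c1 c2"] Scl c1 c2 aS bS by auto
  qed
  then show ?thesis using sub T_def by simp
qed

end
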